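(* Let $G$ be an arbitrary group and let $S$ be a subgroup of $G$. Then every complement $C$ of $S$ in $G$ (i.e. $SC=G$) contains a minimal complement of $S$ in $G$.
   Context: A nonempty set $W'\subseteq G$ is a complement to $W\subseteq G$ if $WW'=G$ (where $WW'=\{ww':w\in W,w'\in W'\}$); it is a minimal complement if no proper subset of $W'$ is a complement to $W$. *)

theory Defs
  imports "HOL-Algebra.Coset"
begin

definition is_complement :: "('a, 'b) monoid_scheme \<Rightarrow> 'a set \<Rightarrow> 'a set \<Rightarrow> bool" where
  "is_complement G W W' \<longleftrightarrow>
     W' \<noteq> {} \<and> W' \<subseteq> carrier G \<and> W <#>\<^bsub>G\<^esub> W' = carrier G"

definition is_minimal_complement :: "('a, 'b) monoid_scheme \<Rightarrow> 'a set \<Rightarrow> 'a set \<Rightarrow> bool" where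
  "is_minimal_complement G W W' \<longleftrightarrow>
     is_complement G W W' \<and> (\<forall>W''. W'' \<subset> W' \<longrightarrow> \<not> is_complement G W W'')"

end

theory Submission
  imports Defs
begin

lemma mem_set_mult_iff:
  "g \<in> S <#>\<^bsub>G\<^esub> W \<longleftrightarrow> (\<exists>w\<in>W. g \<in> S #>\<^bsub>G\<^esub> w)"
  unfolding set_mult_def r_coset_def by auto

theorem proposition4p1:
  fixes G (structure)
  assumes "group G"
    and "subgroup S G"
    and "is_complement G S C"
  shows "\<exists>M. M \<subseteq> C \<and> is_minimal_complement G S M"
proof -
  interpret group G by fact
  have sub: "subgroup S G" by fact
  have C: "C \<noteq> {}" "C \<subseteq> carrier G" "S <#> C = carrier G"
    using assms(3) unfolding is_complement_def by auto
  define f where "f c = (SOME x. x \<in> C \<and> x \<in> S #> c)" for c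
  have fc: "f c \<in> C \<and> f c \<in> S #> c" if "c \<in> C" for c
  proof -
    have "c \<in> carrier G" using that C(2) by blast
    then have "c \<in> S #> c" using sub by (rule rcos_self)
    then show ?thesis unfolding f_def using that by (auto intro: someI2[where a=c])
  qed
  have repr: "S #> x = S #> c" if "x \<in> S #> c" "c \<in> carrier G" for x c
    using repr_independence[OF that sub] by simp
  have cosf: "S #> f c = S #> c" if "c \<in> C" for c
    using fc[OF that] repr[of "f c" c] C(2) that by auto
  define M where "M = f ` C"
  have MC: "M \<subseteq> C" unfolding M_def using fc by auto
  have Mcar: "M \<subseteq> carrier G" using MC C(2) by auto
  have comp: "is_complement G S M"
    unfolding is_complement_def
  proof (intro conjI)
    show "M \<noteq> {}" using C(1) M_def by auto
    show "M \<subseteq> carrier G" by fact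
    show "S <#> M = carrier G"
    proof
      show "S <#> M \<subseteq> carrier G"
        using Mcar subgroup.subset[OF sub] unfolding set_mult_def by auto
      show "carrier G \<subseteq> S <#> M"
      proof
        fix g assume g: "g \<in> carrier G"
        then have "g \<in> S <#> C" using C(3) by simp
        then obtain c where c: "c \<in> C" "g \<in> S #> c"
          unfolding mem_set_mult_iff by blast
        have "S #> g = S #> f c" using repr[OF c(2)] c C(2) cosf[OF c(1)] by auto
        moreover have "g \<in> S #> g" using g sub by (rule rcos_self)
        ultimately have "g \<in> S #> f c" by simp
        moreover have "f c \<in> M" using c(1) M_def by blast
        ultimately show "g \<in> S <#> M" unfolding mem_set_mult_iff by blast
      qed
    qed
  qed
  have "\<not> is_complement G S W" if W: "W \<subset> M" for W
  proof
    assume cw: "is_complement G S W"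
    obtain m where m: "m \<in> M" "m \<notin> W" using W by auto
    then obtain c where c: "c \<in> C" "m = f c" using M_def by auto
    have "m \<in> carrier G" using m Mcar by auto
    then have "m \<in> S <#> W" using cw unfolding is_complement_def by simp
    then obtain w where w: "w \<in> W" "m \<in> S #> w"
      unfolding mem_set_mult_iff by blast
    obtain c' where c': "c' \<in> C" "w = f c'" using w W M_def by auto
    have "w \<in> carrier G" using w W Mcar by auto
    then have "S #> m = S #> w" using repr[OF w(2)] by simp
    then have "S #> c = S #> c'" using cosf c c' by auto
    then have "f c = f c'" unfolding f_def by simp
    then show False using c c' m w by auto
  qed
  then show ?thesis using MC comp unfolding is_minimal_complement_def by blast
qed

end
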